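(* There exist continuous functions $f_1,f_2,f_3,f_4:\mathrm{SO}(3)\to S^3$ such that for every rotation $R\in\mathrm{SO}(3)$, $\mathbf{R}_Q(f_i(R))=R$ for some $i\in\{1,2,3,4\}$.
   Context: $S^3$ is the set of unit quaternions, identifying $w+x\mathbf{i}+y\mathbf{j}+z\mathbf{k}$ with $(w,x,y,z)$. $\mathbf{R}_Q:S^3\to\mathrm{SO}(3)$ is the standard conversion $$\mathbf{R}_Q(w,x,y,z)=\begin{bmatrix}1-2y^2-2z^2 & 2(xy-zw) & 2(xz+yw)\\ 2(xy+zw) & 1-2x^2-2z^2 & 2(yz-xw)\\ 2(xz-yw) & 2(yz+xw) & 1-2x^2-2y^2\end{bmatrix}.$$ *)

theory Defs
  imports "HOL-Analysis.Analysis"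
begin

definition SO3 :: "(real^3^3) set" where
  "SO3 = {A. orthogonal_matrix A \<and> det A = 1}"

text \<open>S^3: unit quaternions w + x i + y j + z k, identified with (w,x,y,z) in R^4,
  represented as nested real pairs (Euclidean norm).\<close>
definition S3 :: "(real \<times> real \<times> real \<times> real) set" where
  "S3 = {q. norm q = 1}"

definition RQ :: "real \<times> real \<times> real \<times> real \<Rightarrow> real^3^3" where
  "RQ q = (case q of (w, x, y, z) \<Rightarrow>
     vector [vector [1 - 2*y^2 - 2*z^2, 2*(x*y - z*w), 2*(x*z + y*w)],
             vector [2*(x*y + z*w), 1 - 2*x^2 - 2*z^2, 2*(y*z - x*w)],
             vector [2*(x*z - y*w), 2*(y*z + x*w), 1 - 2*x^2 - 2*y^2]])"

end

theory Submission
  imports Defs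
begin

lemma cofs:
  fixes a b c d e f g h k u :: real
  assumes r1: "a*a+b*b+c*c=1" and r2: "d*d+e*e+f*f=1" and r3: "g*g+h*h+k*k=1"
  and r12: "a*d+b*e+c*f=0" and r13: "a*g+b*h+c*k=0" and r23: "d*g+e*h+f*k=0"
  and c1: "a*a+d*d+g*g=1" and c2: "b*b+e*e+h*h=1" and c3: "c*c+f*f+k*k=1"
  and c12: "a*b+d*e+g*h=0" and c13: "a*c+d*f+g*k=0" and c23: "b*c+e*f+h*k=0"
  and det: "a*e*k - a*f*h - b*d*k + b*f*g + c*d*h - c*e*g = 1"
  shows "a = e*k-f*h \<and> b = f*g-d*k \<and> c = d*h-e*g \<and> d = c*h-b*k \<and> e = a*k-c*g \<and> f=b*g-a*h \<and> g=b*f-c*e \<and> h=c*d-a*f \<and> k=a*e-b*d"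
proof -
  have X00: "a = e*k-f*h"
  proof -
    have "e*k-f*h = (e*k-f*h)*(a*a+d*d+g*g) + (f*g-d*k)*(a*b+d*e+g*h) + (d*h-e*g)*(a*c+d*f+g*k)" by (simp only: c1 c2 c3 c12 c13 c23, simp)
    also have "... = a * (a*e*k - a*f*h - b*d*k + b*f*g + c*d*h - c*e*g)" by algebra
    finally show ?thesis using det by simp
  qed
  have X01: "b = f*g-d*k"
  proof -
    have "f*g-d*k = (e*k-f*h)*(a*b+d*e+g*h) + (f*g-d*k)*(b*b+e*e+h*h) + (d*h-e*g)*(b*c+e*f+h*k)" by (simp only: c1 c2 c3 c12 c13 c23, simp)
    also have "... = b * (a*e*k - a*f*h - b*d*k + b*f*g + c*d*h - c*e*g)" by algebra
    finally show ?thesis using det by simp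
  qed
  have X02: "c = d*h-e*g"
  proof -
    have "d*h-e*g = (e*k-f*h)*(a*c+d*f+g*k) + (f*g-d*k)*(b*c+e*f+h*k) + (d*h-e*g)*(c*c+f*f+k*k)" by (simp only: c1 c2 c3 c12 c13 c23, simp)
    also have "... = c * (a*e*k - a*f*h - b*d*k + b*f*g + c*d*h - c*e*g)" by algebra
    finally show ?thesis using det by simp
  qed
  have X10: "d = c*h-b*k"
  proof -
    have "c*h-b*k = (c*h-b*k)*(a*a+d*d+g*g) + (a*k-c*g)*(a*b+d*e+g*h) + (b*g-a*h)*(a*c+d*f+g*k)" by (simp only: c1 c2 c3 c12 c13 c23, simp)
    also have "... = d * (a*e*k - a*f*h - b*d*k + b*f*g + c*d*h - c*e*g)" by algebra
    finally show ?thesis using det by simp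
  qed
  have X11: "e = a*k-c*g"
  proof -
    have "a*k-c*g = (c*h-b*k)*(a*b+d*e+g*h) + (a*k-c*g)*(b*b+e*e+h*h) + (b*g-a*h)*(b*c+e*f+h*k)" by (simp only: c1 c2 c3 c12 c13 c23, simp)
    also have "... = e * (a*e*k - a*f*h - b*d*k + b*f*g + c*d*h - c*e*g)" by algebra
    finally show ?thesis using det by simp
  qed
  have X12: "f = b*g-a*h"
  proof -
    have "b*g-a*h = (c*h-b*k)*(a*c+d*f+g*k) + (a*k-c*g)*(b*c+e*f+h*k) + (b*g-a*h)*(c*c+f*f+k*k)" by (simp only: c1 c2 c3 c12 c13 c23, simp)
    also have "... = f * (a*e*k - a*f*h - b*d*k + b*f*g + c*d*h - c*e*g)" by algebra
    finally show ?thesis using det by simp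
  qed
  have X20: "g = b*f-c*e"
  proof -
    have "b*f-c*e = (b*f-c*e)*(a*a+d*d+g*g) + (c*d-a*f)*(a*b+d*e+g*h) + (a*e-b*d)*(a*c+d*f+g*k)" by (simp only: c1 c2 c3 c12 c13 c23, simp)
    also have "... = g * (a*e*k - a*f*h - b*d*k + b*f*g + c*d*h - c*e*g)" by algebra
    finally show ?thesis using det by simp
  qed
  have X21: "h = c*d-a*f"
  proof -
    have "c*d-a*f = (b*f-c*e)*(a*b+d*e+g*h) + (c*d-a*f)*(b*b+e*e+h*h) + (a*e-b*d)*(b*c+e*f+h*k)" by (simp only: c1 c2 c3 c12 c13 c23, simp)
    also have "... = h * (a*e*k - a*f*h - b*d*k + b*f*g + c*d*h - c*e*g)" by algebra
    finally show ?thesis using det by simp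
  qed
  have X22: "k = a*e-b*d"
  proof -
    have "a*e-b*d = (b*f-c*e)*(a*c+d*f+g*k) + (c*d-a*f)*(b*c+e*f+h*k) + (a*e-b*d)*(c*c+f*f+k*k)" by (simp only: c1 c2 c3 c12 c13 c23, simp)
    also have "... = k * (a*e*k - a*f*h - b*d*k + b*f*g + c*d*h - c*e*g)" by algebra
    finally show ?thesis using det by simp
  qed

  show ?thesis using X00 X01 X02 X10 X11 X12 X20 X21 X22 by blast
qed

lemma case1:
  fixes a b c d e f g h k u :: real
  assumes r1: "a*a+b*b+c*c=1" and r2: "d*d+e*e+f*f=1" and r3: "g*g+h*h+k*k=1"
  and r12: "a*d+b*e+c*f=0" and r13: "a*g+b*h+c*k=0" and r23: "d*g+e*h+f*k=0"
  and c1: "a*a+d*d+g*g=1" and c2: "b*b+e*e+h*h=1" and c3: "c*c+f*f+k*k=1"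
  and c12: "a*b+d*e+g*h=0" and c13: "a*c+d*f+g*k=0" and c23: "b*c+e*f+h*k=0"
  and det: "a*e*k - a*f*h - b*d*k + b*f*g + c*d*h - c*e*g = 1"
  and u: "u = 1+a+e+k"
  shows "((u)^2+(h-f)^2+(c-g)^2+(d-b)^2) = 4*u" and "4*u*a = 4*u - 2*(c-g)^2 - 2*(d-b)^2" and "4*u*b = 2*((h-f)*(c-g) - (d-b)*(u))"
   and "4*u*c = 2*((h-f)*(d-b) + (c-g)*(u))" and "4*u*d = 2*((h-f)*(c-g) + (d-b)*(u))"
   and "4*u*e = 4*u - 2*(h-f)^2 - 2*(d-b)^2" and "4*u*f = 2*((c-g)*(d-b) - (h-f)*(u))"
   and "4*u*g = 2*((h-f)*(d-b) - (c-g)*(u))" and "4*u*h = 2*((c-g)*(d-b) + (h-f)*(u))"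
   and "4*u*k = 4*u - 2*(h-f)^2 - 2*(c-g)^2"
proof -
  have cf: "a = e*k-f*h \<and> b = f*g-d*k \<and> c = d*h-e*g \<and> d = c*h-b*k \<and> e = a*k-c*g \<and> f=b*g-a*h \<and> g=b*f-c*e \<and> h=c*d-a*f \<and> k=a*e-b*d"
    by (rule cofs[OF assms(1-13)])
  then have cf1: "a = e*k-f*h" "b = f*g-d*k" "c = d*h-e*g" "d = c*h-b*k" "e = a*k-c*g" "f=b*g-a*h" "g=b*f-c*e" "h=c*d-a*f" "k=a*e-b*d" by blast+
  note H = r1 r2 r3 r12 r13 r23 c1 c2 c3 c12 c13 c23 cf1 u
  show "((u)^2+(h-f)^2+(c-g)^2+(d-b)^2) = 4*u" using H by algebra
  show "4*u*a = 4*u - 2*(c-g)^2 - 2*(d-b)^2" using H by algebra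
  show "4*u*b = 2*((h-f)*(c-g) - (d-b)*(u))" using H by algebra
  show "4*u*c = 2*((h-f)*(d-b) + (c-g)*(u))" using H by algebra
  show "4*u*d = 2*((h-f)*(c-g) + (d-b)*(u))" using H by algebra
  show "4*u*e = 4*u - 2*(h-f)^2 - 2*(d-b)^2" using H by algebra
  show "4*u*f = 2*((c-g)*(d-b) - (h-f)*(u))" using H by algebra
  show "4*u*g = 2*((h-f)*(d-b) - (c-g)*(u))" using H by algebra
  show "4*u*h = 2*((c-g)*(d-b) + (h-f)*(u))" using H by algebra
  show "4*u*k = 4*u - 2*(h-f)^2 - 2*(c-g)^2" using H by algebra
qed

lemma case2:
  fixes a b c d e f g h k u :: real
  assumes r1: "a*a+b*b+c*c=1" and r2: "d*d+e*e+f*f=1" and r3: "g*g+h*h+k*k=1"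
  and r12: "a*d+b*e+c*f=0" and r13: "a*g+b*h+c*k=0" and r23: "d*g+e*h+f*k=0"
  and c1: "a*a+d*d+g*g=1" and c2: "b*b+e*e+h*h=1" and c3: "c*c+f*f+k*k=1"
  and c12: "a*b+d*e+g*h=0" and c13: "a*c+d*f+g*k=0" and c23: "b*c+e*f+h*k=0"
  and det: "a*e*k - a*f*h - b*d*k + b*f*g + c*d*h - c*e*g = 1"
  and u: "u = 1+a-e-k"
  shows "((h-f)^2+(u)^2+(b+d)^2+(c+g)^2) = 4*u" and "4*u*a = 4*u - 2*(b+d)^2 - 2*(c+g)^2" and "4*u*b = 2*((u)*(b+d) - (c+g)*(h-f))"
   and "4*u*c = 2*((u)*(c+g) + (b+d)*(h-f))" and "4*u*d = 2*((u)*(b+d) + (c+g)*(h-f))"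
   and "4*u*e = 4*u - 2*(u)^2 - 2*(c+g)^2" and "4*u*f = 2*((b+d)*(c+g) - (u)*(h-f))"
   and "4*u*g = 2*((u)*(c+g) - (b+d)*(h-f))" and "4*u*h = 2*((b+d)*(c+g) + (u)*(h-f))"
   and "4*u*k = 4*u - 2*(u)^2 - 2*(b+d)^2"
proof -
  have cf: "a = e*k-f*h \<and> b = f*g-d*k \<and> c = d*h-e*g \<and> d = c*h-b*k \<and> e = a*k-c*g \<and> f=b*g-a*h \<and> g=b*f-c*e \<and> h=c*d-a*f \<and> k=a*e-b*d"
    by (rule cofs[OF assms(1-13)])
  then have cf1: "a = e*k-f*h" "b = f*g-d*k" "c = d*h-e*g" "d = c*h-b*k" "e = a*k-c*g" "f=b*g-a*h" "g=b*f-c*e" "h=c*d-a*f" "k=a*e-b*d" by blast+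
  note H = r1 r2 r3 r12 r13 r23 c1 c2 c3 c12 c13 c23 cf1 u
  show "((h-f)^2+(u)^2+(b+d)^2+(c+g)^2) = 4*u" using H by algebra
  show "4*u*a = 4*u - 2*(b+d)^2 - 2*(c+g)^2" using H by algebra
  show "4*u*b = 2*((u)*(b+d) - (c+g)*(h-f))" using H by algebra
  show "4*u*c = 2*((u)*(c+g) + (b+d)*(h-f))" using H by algebra
  show "4*u*d = 2*((u)*(b+d) + (c+g)*(h-f))" using H by algebra
  show "4*u*e = 4*u - 2*(u)^2 - 2*(c+g)^2" using H by algebra
  show "4*u*f = 2*((b+d)*(c+g) - (u)*(h-f))" using H by algebra
  show "4*u*g = 2*((u)*(c+g) - (b+d)*(h-f))" using H by algebra
  show "4*u*h = 2*((b+d)*(c+g) + (u)*(h-f))" using H by algebra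
  show "4*u*k = 4*u - 2*(u)^2 - 2*(b+d)^2" using H by algebra
qed

lemma case3:
  fixes a b c d e f g h k u :: real
  assumes r1: "a*a+b*b+c*c=1" and r2: "d*d+e*e+f*f=1" and r3: "g*g+h*h+k*k=1"
  and r12: "a*d+b*e+c*f=0" and r13: "a*g+b*h+c*k=0" and r23: "d*g+e*h+f*k=0"
  and c1: "a*a+d*d+g*g=1" and c2: "b*b+e*e+h*h=1" and c3: "c*c+f*f+k*k=1"
  and c12: "a*b+d*e+g*h=0" and c13: "a*c+d*f+g*k=0" and c23: "b*c+e*f+h*k=0"
  and det: "a*e*k - a*f*h - b*d*k + b*f*g + c*d*h - c*e*g = 1"
  and u: "u = 1-a+e-k"
  shows "((c-g)^2+(b+d)^2+(u)^2+(f+h)^2) = 4*u" and "4*u*a = 4*u - 2*(u)^2 - 2*(f+h)^2" and "4*u*b = 2*((b+d)*(u) - (f+h)*(c-g))"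
   and "4*u*c = 2*((b+d)*(f+h) + (u)*(c-g))" and "4*u*d = 2*((b+d)*(u) + (f+h)*(c-g))"
   and "4*u*e = 4*u - 2*(b+d)^2 - 2*(f+h)^2" and "4*u*f = 2*((u)*(f+h) - (b+d)*(c-g))"
   and "4*u*g = 2*((b+d)*(f+h) - (u)*(c-g))" and "4*u*h = 2*((u)*(f+h) + (b+d)*(c-g))"
   and "4*u*k = 4*u - 2*(b+d)^2 - 2*(u)^2"
proof -
  have cf: "a = e*k-f*h \<and> b = f*g-d*k \<and> c = d*h-e*g \<and> d = c*h-b*k \<and> e = a*k-c*g \<and> f=b*g-a*h \<and> g=b*f-c*e \<and> h=c*d-a*f \<and> k=a*e-b*d"
    by (rule cofs[OF assms(1-13)])
  then have cf1: "a = e*k-f*h" "b = f*g-d*k" "c = d*h-e*g" "d = c*h-b*k" "e = a*k-c*g" "f=b*g-a*h" "g=b*f-c*e" "h=c*d-a*f" "k=a*e-b*d" by blast+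
  note H = r1 r2 r3 r12 r13 r23 c1 c2 c3 c12 c13 c23 cf1 u
  show "((c-g)^2+(b+d)^2+(u)^2+(f+h)^2) = 4*u" using H by algebra
  show "4*u*a = 4*u - 2*(u)^2 - 2*(f+h)^2" using H by algebra
  show "4*u*b = 2*((b+d)*(u) - (f+h)*(c-g))" using H by algebra
  show "4*u*c = 2*((b+d)*(f+h) + (u)*(c-g))" using H by algebra
  show "4*u*d = 2*((b+d)*(u) + (f+h)*(c-g))" using H by algebra
  show "4*u*e = 4*u - 2*(b+d)^2 - 2*(f+h)^2" using H by algebra
  show "4*u*f = 2*((u)*(f+h) - (b+d)*(c-g))" using H by algebra
  show "4*u*g = 2*((b+d)*(f+h) - (u)*(c-g))" using H by algebra
  show "4*u*h = 2*((u)*(f+h) + (b+d)*(c-g))" using H by algebra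
  show "4*u*k = 4*u - 2*(b+d)^2 - 2*(u)^2" using H by algebra
qed

lemma case4:
  fixes a b c d e f g h k u :: real
  assumes r1: "a*a+b*b+c*c=1" and r2: "d*d+e*e+f*f=1" and r3: "g*g+h*h+k*k=1"
  and r12: "a*d+b*e+c*f=0" and r13: "a*g+b*h+c*k=0" and r23: "d*g+e*h+f*k=0"
  and c1: "a*a+d*d+g*g=1" and c2: "b*b+e*e+h*h=1" and c3: "c*c+f*f+k*k=1"
  and c12: "a*b+d*e+g*h=0" and c13: "a*c+d*f+g*k=0" and c23: "b*c+e*f+h*k=0"
  and det: "a*e*k - a*f*h - b*d*k + b*f*g + c*d*h - c*e*g = 1"
  and u: "u = 1-a-e+k"
  shows "((d-b)^2+(c+g)^2+(f+h)^2+(u)^2) = 4*u" and "4*u*a = 4*u - 2*(f+h)^2 - 2*(u)^2" and "4*u*b = 2*((c+g)*(f+h) - (u)*(d-b))"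
   and "4*u*c = 2*((c+g)*(u) + (f+h)*(d-b))" and "4*u*d = 2*((c+g)*(f+h) + (u)*(d-b))"
   and "4*u*e = 4*u - 2*(c+g)^2 - 2*(u)^2" and "4*u*f = 2*((f+h)*(u) - (c+g)*(d-b))"
   and "4*u*g = 2*((c+g)*(u) - (f+h)*(d-b))" and "4*u*h = 2*((f+h)*(u) + (c+g)*(d-b))"
   and "4*u*k = 4*u - 2*(c+g)^2 - 2*(f+h)^2"
proof -
  have cf: "a = e*k-f*h \<and> b = f*g-d*k \<and> c = d*h-e*g \<and> d = c*h-b*k \<and> e = a*k-c*g \<and> f=b*g-a*h \<and> g=b*f-c*e \<and> h=c*d-a*f \<and> k=a*e-b*d"
    by (rule cofs[OF assms(1-13)])
  then have cf1: "a = e*k-f*h" "b = f*g-d*k" "c = d*h-e*g" "d = c*h-b*k" "e = a*k-c*g" "f=b*g-a*h" "g=b*f-c*e" "h=c*d-a*f" "k=a*e-b*d" by blast+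
  note H = r1 r2 r3 r12 r13 r23 c1 c2 c3 c12 c13 c23 cf1 u
  show "((d-b)^2+(c+g)^2+(f+h)^2+(u)^2) = 4*u" using H by algebra
  show "4*u*a = 4*u - 2*(f+h)^2 - 2*(u)^2" using H by algebra
  show "4*u*b = 2*((c+g)*(f+h) - (u)*(d-b))" using H by algebra
  show "4*u*c = 2*((c+g)*(u) + (f+h)*(d-b))" using H by algebra
  show "4*u*d = 2*((c+g)*(f+h) + (u)*(d-b))" using H by algebra
  show "4*u*e = 4*u - 2*(c+g)^2 - 2*(u)^2" using H by algebra
  show "4*u*f = 2*((f+h)*(u) - (c+g)*(d-b))" using H by algebra
  show "4*u*g = 2*((c+g)*(u) - (f+h)*(d-b))" using H by algebra
  show "4*u*h = 2*((f+h)*(u) + (c+g)*(d-b))" using H by algebra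
  show "4*u*k = 4*u - 2*(c+g)^2 - 2*(f+h)^2" using H by algebra
qed


lemma norm4: "norm (w::real, x::real, y::real, z::real) = sqrt (w^2+x^2+y^2+z^2)"
  by (simp add: norm_Pair add.assoc)

lemma RQ_eq:
  fixes R :: "real^3^3" and W X Y Z u :: real
  assumes N: "W^2+X^2+Y^2+Z^2 = 4*u"
  and e11: "4*u*R $ 1 $ 1 = 4*u - 2*Y^2 - 2*Z^2" and e12: "4*u*R $ 1 $ 2 = 2*(X*Y - Z*W)"
   and e13: "4*u*R $ 1 $ 3 = 2*(X*Z + Y*W)" and e21: "4*u*R $ 2 $ 1 = 2*(X*Y + Z*W)"
   and e22: "4*u*R $ 2 $ 2 = 4*u - 2*X^2 - 2*Z^2" and e23: "4*u*R $ 2 $ 3 = 2*(Y*Z - X*W)"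
   and e31: "4*u*R $ 3 $ 1 = 2*(X*Z - Y*W)" and e32: "4*u*R $ 3 $ 2 = 2*(Y*Z + X*W)"
   and e33: "4*u*R $ 3 $ 3 = 4*u - 2*X^2 - 2*Y^2" and sp: "u > 0"
  shows "RQ ((1 / norm (W,X,Y,Z)) *\<^sub>R (W,X,Y,Z)) = R"
proof -
  define n where "n = sqrt (4*u)"
  have nn: "norm (W,X,Y,Z) = n" unfolding n_def norm4 N ..
  have n2: "n^2 = 4*u" unfolding n_def using sp by simp
  have npos: "n > 0" unfolding n_def using sp by simp
  have sq: "\<And>p. (p / n)^2 = p^2 / (4*u)" by (simp add: power_divide n2)
  have pr: "\<And>p v. (p / n) * (v / n) = p * v / (4*u)" by (simp add: n2[symmetric] power2_eq_square)
  have nn2: "n * n = 4*u" using n2 by (simp add: power2_eq_square)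
  have q: "(1 / norm (W,X,Y,Z)) *\<^sub>R (W,X,Y,Z) = (W/n, X/n, Y/n, Z/n)" by (simp add: nn)
  have E11: "1 - 2*(Y/n)^2 - 2*(Z/n)^2 = R $ 1 $ 1" using sp e11 by (simp add: power_divide n2 field_simps) (metis distrib_left)
  have E22: "1 - 2*(X/n)^2 - 2*(Z/n)^2 = R $ 2 $ 2" using sp e22 by (simp add: power_divide n2 field_simps) (metis distrib_left)
  have E33: "1 - 2*(X/n)^2 - 2*(Y/n)^2 = R $ 3 $ 3" using sp e33 by (simp add: power_divide n2 field_simps) (metis distrib_left)
  have E12: "2*(X/n*(Y/n) - Z/n*(W/n)) = R $ 1 $ 2" using sp e12 by (simp add: nn2 field_simps)
  have E13: "2*(X/n*(Z/n) + Y/n*(W/n)) = R $ 1 $ 3" using sp e13 by (simp add: nn2 field_simps)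
  have E21: "2*(X/n*(Y/n) + Z/n*(W/n)) = R $ 2 $ 1" using sp e21 by (simp add: nn2 field_simps)
  have E23: "2*(Y/n*(Z/n) - X/n*(W/n)) = R $ 2 $ 3" using sp e23 by (simp add: nn2 field_simps)
  have E31: "2*(X/n*(Z/n) - Y/n*(W/n)) = R $ 3 $ 1" using sp e31 by (simp add: nn2 field_simps)
  have E32: "2*(Y/n*(Z/n) + X/n*(W/n)) = R $ 3 $ 2" using sp e32 by (simp add: nn2 field_simps)
  have "RQ (W/n, X/n, Y/n, Z/n) = vector [vector [R $ 1$ 1, R $ 1$ 2, R $ 1$ 3], vector [R $ 2$ 1, R $ 2$ 2, R $ 2$ 3], vector [R $ 3$ 1, R $ 3$ 2, R $ 3$ 3]]"
    unfolding RQ_def prod.case E11 E22 E33 E12 E13 E21 E23 E31 E32 by (rule refl)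
  also have "... = R" by (simp add: vec_eq_iff forall_3 vector_3)
  finally show ?thesis unfolding q .
qed

lemma so3_eqs:
  fixes R :: "real^3^3"
  assumes "R \<in> SO3"
  shows "(R $ 1 $ 1)*(R $ 1 $ 1)+(R $ 1 $ 2)*(R $ 1 $ 2)+(R $ 1 $ 3)*(R $ 1 $ 3)=1" and "(R $ 2 $ 1)*(R $ 2 $ 1)+(R $ 2 $ 2)*(R $ 2 $ 2)+(R $ 2 $ 3)*(R $ 2 $ 3)=1" and "(R $ 3 $ 1)*(R $ 3 $ 1)+(R $ 3 $ 2)*(R $ 3 $ 2)+(R $ 3 $ 3)*(R $ 3 $ 3)=1" and "(R $ 1 $ 1)*(R $ 2 $ 1)+(R $ 1 $ 2)*(R $ 2 $ 2)+(R $ 1 $ 3)*(R $ 2 $ 3)=0" and "(R $ 1 $ 1)*(R $ 3 $ 1)+(R $ 1 $ 2)*(R $ 3 $ 2)+(R $ 1 $ 3)*(R $ 3 $ 3)=0" and "(R $ 2 $ 1)*(R $ 3 $ 1)+(R $ 2 $ 2)*(R $ 3 $ 2)+(R $ 2 $ 3)*(R $ 3 $ 3)=0" and "(R $ 1 $ 1)*(R $ 1 $ 1)+(R $ 2 $ 1)*(R $ 2 $ 1)+(R $ 3 $ 1)*(R $ 3 $ 1)=1" and "(R $ 1 $ 2)*(R $ 1 $ 2)+(R $ 2 $ 2)*(R $ 2 $ 2)+(R $ 3 $ 2)*(R $ 3 $ 2)=1" and "(R $ 1 $ 3)*(R $ 1 $ 3)+(R $ 2 $ 3)*(R $ 2 $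 3)+(R $ 3 $ 3)*(R $ 3 $ 3)=1" and "(R $ 1 $ 1)*(R $ 1 $ 2)+(R $ 2 $ 1)*(R $ 2 $ 2)+(R $ 3 $ 1)*(R $ 3 $ 2)=0" and "(R $ 1 $ 1)*(R $ 1 $ 3)+(R $ 2 $ 1)*(R $ 2 $ 3)+(R $ 3 $ 1)*(R $ 3 $ 3)=0" and "(R $ 1 $ 2)*(R $ 1 $ 3)+(R $ 2 $ 2)*(R $ 2 $ 3)+(R $ 3 $ 2)*(R $ 3 $ 3)=0" and "(R $ 1 $ 1)*(R $ 2 $ 2)*(R $ 3 $ 3) - (R $ 1 $ 1)*(R $ 2 $ 3)*(R $ 3 $ 2) - (R $ 1 $ 2)*(R $ 2 $ 1)*(R $ 3 $ 3) + (R $ 1 $ 2)*(R $ 2 $ 3)*(R $ 3 $ 1) + (R $ 1 $ 3)*(R $ 2 $ 1)*(R $ 3 $ 2) - (R $ 1 $ 3)*(R $ 2 $ 2)*(R $ 3 $ 1) = 1"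
proof -
  have o1: "transpose R ** R = mat 1" and o2: "R ** transpose R = mat 1" and d: "det R = 1"
    using assms unfolding SO3_def orthogonal_matrix_def by auto
  have O1: "\<And>i j. (transpose R ** R) $ i $ j = mat 1 $ i $ j" using o1 by simp
  have O2: "\<And>i j. (R ** transpose R) $ i $ j = mat 1 $ i $ j" using o2 by simp
  show "(R $ 1 $ 1)*(R $ 1 $ 1)+(R $ 1 $ 2)*(R $ 1 $ 2)+(R $ 1 $ 3)*(R $ 1 $ 3)=1" using O2[of 1 1]
    by (simp add: matrix_matrix_mult_def transpose_def mat_def sum_3 algebra_simps)
  show "(R $ 2 $ 1)*(R $ 2 $ 1)+(R $ 2 $ 2)*(R $ 2 $ 2)+(R $ 2 $ 3)*(R $ 2 $ 3)=1" using O2[of 2 2]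
    by (simp add: matrix_matrix_mult_def transpose_def mat_def sum_3 algebra_simps)
  show "(R $ 3 $ 1)*(R $ 3 $ 1)+(R $ 3 $ 2)*(R $ 3 $ 2)+(R $ 3 $ 3)*(R $ 3 $ 3)=1" using O2[of 3 3]
    by (simp add: matrix_matrix_mult_def transpose_def mat_def sum_3 algebra_simps)
  show "(R $ 1 $ 1)*(R $ 2 $ 1)+(R $ 1 $ 2)*(R $ 2 $ 2)+(R $ 1 $ 3)*(R $ 2 $ 3)=0" using O2[of 1 2]
    by (simp add: matrix_matrix_mult_def transpose_def mat_def sum_3 algebra_simps)
  show "(R $ 1 $ 1)*(R $ 3 $ 1)+(R $ 1 $ 2)*(R $ 3 $ 2)+(R $ 1 $ 3)*(R $ 3 $ 3)=0" using O2[of 1 3]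
    by (simp add: matrix_matrix_mult_def transpose_def mat_def sum_3 algebra_simps)
  show "(R $ 2 $ 1)*(R $ 3 $ 1)+(R $ 2 $ 2)*(R $ 3 $ 2)+(R $ 2 $ 3)*(R $ 3 $ 3)=0" using O2[of 2 3]
    by (simp add: matrix_matrix_mult_def transpose_def mat_def sum_3 algebra_simps)
  show "(R $ 1 $ 1)*(R $ 1 $ 1)+(R $ 2 $ 1)*(R $ 2 $ 1)+(R $ 3 $ 1)*(R $ 3 $ 1)=1" using O1[of 1 1]
    by (simp add: matrix_matrix_mult_def transpose_def mat_def sum_3 algebra_simps)
  show "(R $ 1 $ 2)*(R $ 1 $ 2)+(R $ 2 $ 2)*(R $ 2 $ 2)+(R $ 3 $ 2)*(R $ 3 $ 2)=1" using O1[of 2 2]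
    by (simp add: matrix_matrix_mult_def transpose_def mat_def sum_3 algebra_simps)
  show "(R $ 1 $ 3)*(R $ 1 $ 3)+(R $ 2 $ 3)*(R $ 2 $ 3)+(R $ 3 $ 3)*(R $ 3 $ 3)=1" using O1[of 3 3]
    by (simp add: matrix_matrix_mult_def transpose_def mat_def sum_3 algebra_simps)
  show "(R $ 1 $ 1)*(R $ 1 $ 2)+(R $ 2 $ 1)*(R $ 2 $ 2)+(R $ 3 $ 1)*(R $ 3 $ 2)=0" using O1[of 1 2]
    by (simp add: matrix_matrix_mult_def transpose_def mat_def sum_3 algebra_simps)
  show "(R $ 1 $ 1)*(R $ 1 $ 3)+(R $ 2 $ 1)*(R $ 2 $ 3)+(R $ 3 $ 1)*(R $ 3 $ 3)=0" using O1[of 1 3]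
    by (simp add: matrix_matrix_mult_def transpose_def mat_def sum_3 algebra_simps)
  show "(R $ 1 $ 2)*(R $ 1 $ 3)+(R $ 2 $ 2)*(R $ 2 $ 3)+(R $ 3 $ 2)*(R $ 3 $ 3)=0" using O1[of 2 3]
    by (simp add: matrix_matrix_mult_def transpose_def mat_def sum_3 algebra_simps)
  show "(R $ 1 $ 1)*(R $ 2 $ 2)*(R $ 3 $ 3) - (R $ 1 $ 1)*(R $ 2 $ 3)*(R $ 3 $ 2) - (R $ 1 $ 2)*(R $ 2 $ 1)*(R $ 3 $ 3) + (R $ 1 $ 2)*(R $ 2 $ 3)*(R $ 3 $ 1) + (R $ 1 $ 3)*(R $ 2 $ 1)*(R $ 3 $ 2) - (R $ 1 $ 3)*(R $ 2 $ 2)*(R $ 3 $ 1) = 1" using d by (simp add: det_3 algebra_simps)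
qed

definition F :: "(real^3^3 \<Rightarrow> real \<times> real \<times> real \<times> real) \<Rightarrow> real^3^3 \<Rightarrow> real \<times> real \<times> real \<times> real" where
  "F G R = (1 / norm (G R)) *\<^sub>R G R"

lemma F_props:
  assumes "continuous_on SO3 G" "\<And>R. G R \<noteq> 0"
  shows "continuous_on SO3 (F G)" "F G ` SO3 \<subseteq> S3"
proof -
  show "continuous_on SO3 (F G)" unfolding F_def
    by (intro continuous_intros assms) (simp add: assms)
  show "F G ` SO3 \<subseteq> S3" unfolding F_def S3_def using assms(2) by auto
qed

definition G1 :: "real^3^3 \<Rightarrow> real \<times> real \<times> real \<times> real" where
  "G1 R = (max (1+(R $ 1 $ 1)+(R $ 2 $ 2)+(R $ 3 $ 3)) 1, ((R $ 3 $ 2)-(R $ 2 $ 3)), ((R $ 1 $ 3)-(R $ 3 $ 1)), ((R $ 2 $ 1)-(R $ 1 $ 2)))"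

lemma G1_cont: "continuous_on SO3 G1"
  unfolding G1_def by (intro continuous_intros)

lemma G1_nz: "G1 R \<noteq> 0"
  by (simp add: G1_def zero_prod_def max_def)

lemma corr1:
  assumes R: "R \<in> SO3" and le: "1 \<le> 1+(R $ 1 $ 1)+(R $ 2 $ 2)+(R $ 3 $ 3)"
  shows "RQ (F G1 R) = R"
proof -
  note E = so3_eqs[OF R]
  note C = case1[of "R $ 1 $ 1" "R $ 1 $ 2" "R $ 1 $ 3" "R $ 2 $ 1" "R $ 2 $ 2" "R $ 2 $ 3" "R $ 3 $ 1" "R $ 3 $ 2" "R $ 3 $ 3" "1+(R $ 1 $ 1)+(R $ 2 $ 2)+(R $ 3 $ 3)", OF E refl]
  have pos: "0 < 1+(R $ 1 $ 1)+(R $ 2 $ 2)+(R $ 3 $ 3)" using le by simp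
  have Geq: "G1 R = ((1+(R $ 1 $ 1)+(R $ 2 $ 2)+(R $ 3 $ 3)), ((R $ 3 $ 2)-(R $ 2 $ 3)), ((R $ 1 $ 3)-(R $ 3 $ 1)), ((R $ 2 $ 1)-(R $ 1 $ 2)))" using le by (simp add: G1_def)
  show ?thesis unfolding F_def Geq by (rule RQ_eq[OF C pos])
qed

definition G2 :: "real^3^3 \<Rightarrow> real \<times> real \<times> real \<times> real" where
  "G2 R = (((R $ 3 $ 2)-(R $ 2 $ 3)), max (1+(R $ 1 $ 1)-(R $ 2 $ 2)-(R $ 3 $ 3)) 1, ((R $ 1 $ 2)+(R $ 2 $ 1)), ((R $ 1 $ 3)+(R $ 3 $ 1)))"

lemma G2_cont: "continuous_on SO3 G2"
  unfolding G2_def by (intro continuous_intros)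

lemma G2_nz: "G2 R \<noteq> 0"
  by (simp add: G2_def zero_prod_def max_def)

lemma corr2:
  assumes R: "R \<in> SO3" and le: "1 \<le> 1+(R $ 1 $ 1)-(R $ 2 $ 2)-(R $ 3 $ 3)"
  shows "RQ (F G2 R) = R"
proof -
  note E = so3_eqs[OF R]
  note C = case2[of "R $ 1 $ 1" "R $ 1 $ 2" "R $ 1 $ 3" "R $ 2 $ 1" "R $ 2 $ 2" "R $ 2 $ 3" "R $ 3 $ 1" "R $ 3 $ 2" "R $ 3 $ 3" "1+(R $ 1 $ 1)-(R $ 2 $ 2)-(R $ 3 $ 3)", OF E refl]
  have pos: "0 < 1+(R $ 1 $ 1)-(R $ 2 $ 2)-(R $ 3 $ 3)" using le by simp
  have Geq: "G2 R = (((R $ 3 $ 2)-(R $ 2 $ 3)), (1+(R $ 1 $ 1)-(R $ 2 $ 2)-(R $ 3 $ 3)), ((R $ 1 $ 2)+(R $ 2 $ 1)), ((R $ 1 $ 3)+(R $ 3 $ 1)))" using le by (simp add: G2_def)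
  show ?thesis unfolding F_def Geq by (rule RQ_eq[OF C pos])
qed

definition G3 :: "real^3^3 \<Rightarrow> real \<times> real \<times> real \<times> real" where
  "G3 R = (((R $ 1 $ 3)-(R $ 3 $ 1)), ((R $ 1 $ 2)+(R $ 2 $ 1)), max (1-(R $ 1 $ 1)+(R $ 2 $ 2)-(R $ 3 $ 3)) 1, ((R $ 2 $ 3)+(R $ 3 $ 2)))"

lemma G3_cont: "continuous_on SO3 G3"
  unfolding G3_def by (intro continuous_intros)

lemma G3_nz: "G3 R \<noteq> 0"
  by (simp add: G3_def zero_prod_def max_def)

lemma corr3:
  assumes R: "R \<in> SO3" and le: "1 \<le> 1-(R $ 1 $ 1)+(R $ 2 $ 2)-(R $ 3 $ 3)"
  shows "RQ (F G3 R) = R"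
proof -
  note E = so3_eqs[OF R]
  note C = case3[of "R $ 1 $ 1" "R $ 1 $ 2" "R $ 1 $ 3" "R $ 2 $ 1" "R $ 2 $ 2" "R $ 2 $ 3" "R $ 3 $ 1" "R $ 3 $ 2" "R $ 3 $ 3" "1-(R $ 1 $ 1)+(R $ 2 $ 2)-(R $ 3 $ 3)", OF E refl]
  have pos: "0 < 1-(R $ 1 $ 1)+(R $ 2 $ 2)-(R $ 3 $ 3)" using le by simp
  have Geq: "G3 R = (((R $ 1 $ 3)-(R $ 3 $ 1)), ((R $ 1 $ 2)+(R $ 2 $ 1)), (1-(R $ 1 $ 1)+(R $ 2 $ 2)-(R $ 3 $ 3)), ((R $ 2 $ 3)+(R $ 3 $ 2)))" using le by (simp add: G3_def)
  show ?thesis unfolding F_def Geq by (rule RQ_eq[OF C pos])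
qed

definition G4 :: "real^3^3 \<Rightarrow> real \<times> real \<times> real \<times> real" where
  "G4 R = (((R $ 2 $ 1)-(R $ 1 $ 2)), ((R $ 1 $ 3)+(R $ 3 $ 1)), ((R $ 2 $ 3)+(R $ 3 $ 2)), max (1-(R $ 1 $ 1)-(R $ 2 $ 2)+(R $ 3 $ 3)) 1)"

lemma G4_cont: "continuous_on SO3 G4"
  unfolding G4_def by (intro continuous_intros)

lemma G4_nz: "G4 R \<noteq> 0"
  by (simp add: G4_def zero_prod_def max_def)

lemma corr4:
  assumes R: "R \<in> SO3" and le: "1 \<le> 1-(R $ 1 $ 1)-(R $ 2 $ 2)+(R $ 3 $ 3)"
  shows "RQ (F G4 R) = R"
proof -
  note E = so3_eqs[OF R]
  note C = case4[of "R $ 1 $ 1" "R $ 1 $ 2" "R $ 1 $ 3" "R $ 2 $ 1" "R $ 2 $ 2" "R $ 2 $ 3" "R $ 3 $ 1" "R $ 3 $ 2" "R $ 3 $ 3" "1-(R $ 1 $ 1)-(R $ 2 $ 2)+(R $ 3 $ 3)", OF E refl]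
  have pos: "0 < 1-(R $ 1 $ 1)-(R $ 2 $ 2)+(R $ 3 $ 3)" using le by simp
  have Geq: "G4 R = (((R $ 2 $ 1)-(R $ 1 $ 2)), ((R $ 1 $ 3)+(R $ 3 $ 1)), ((R $ 2 $ 3)+(R $ 3 $ 2)), (1-(R $ 1 $ 1)-(R $ 2 $ 2)+(R $ 3 $ 3)))" using le by (simp add: G4_def)
  show ?thesis unfolding F_def Geq by (rule RQ_eq[OF C pos])
qed

theorem theorem6:
  shows "\<exists>f1 f2 f3 f4 :: real^3^3 \<Rightarrow> real \<times> real \<times> real \<times> real.
    continuous_on SO3 f1 \<and> continuous_on SO3 f2 \<and> continuous_on SO3 f3 \<and> continuous_on SO3 f4 \<and>
    f1 ` SO3 \<subseteq> S3 \<and> f2 ` SO3 \<subseteq> S3 \<and> f3 ` SO3 \<subseteq> S3 \<and> f4 ` SO3 \<subseteq> S3 \<and>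
    (\<forall>R\<in>SO3. RQ (f1 R) = R \<or> RQ (f2 R) = R \<or> RQ (f3 R) = R \<or> RQ (f4 R) = R)"
proof (intro exI conjI)
  show "continuous_on SO3 (F G1)" by (rule F_props(1)[OF G1_cont G1_nz])
  show "continuous_on SO3 (F G2)" by (rule F_props(1)[OF G2_cont G2_nz])
  show "continuous_on SO3 (F G3)" by (rule F_props(1)[OF G3_cont G3_nz])
  show "continuous_on SO3 (F G4)" by (rule F_props(1)[OF G4_cont G4_nz])
  show "F G1 ` SO3 \<subseteq> S3" by (rule F_props(2)[OF G1_cont G1_nz])
  show "F G2 ` SO3 \<subseteq> S3" by (rule F_props(2)[OF G2_cont G2_nz])
  show "F G3 ` SO3 \<subseteq> S3" by (rule F_props(2)[OF G3_cont G3_nz])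
  show "F G4 ` SO3 \<subseteq> S3" by (rule F_props(2)[OF G4_cont G4_nz])
  show "\<forall>R\<in>SO3. RQ (F G1 R) = R \<or> RQ (F G2 R) = R \<or> RQ (F G3 R) = R \<or> RQ (F G4 R) = R"
  proof
    fix R assume R: "R \<in> SO3"
    have "1 \<le> 1+(R $ 1 $ 1)+(R $ 2 $ 2)+(R $ 3 $ 3) \<or> 1 \<le> 1+(R $ 1 $ 1)-(R $ 2 $ 2)-(R $ 3 $ 3) \<or> 1 \<le> 1-(R $ 1 $ 1)+(R $ 2 $ 2)-(R $ 3 $ 3) \<or> 1 \<le> 1-(R $ 1 $ 1)-(R $ 2 $ 2)+(R $ 3 $ 3)" by linarith
    then show "RQ (F G1 R) = R \<or> RQ (F G2 R) = R \<or> RQ (F G3 R) = R \<or> RQ (F G4 R) = R"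
      using corr1[OF R] corr2[OF R] corr3[OF R] corr4[OF R] by blast
  qed
qed

end
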